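(* Let $1\le q\le p\le\infty$, $E$ a Banach space, $Y$ a Banach lattice and $T:E\to Y$ a bounded linear operator. Then $T$ is positive $(p,q)$-majorizing if and only if $T$ is positive strongly $(p,q)$-summing.
   Context: $p^{\ast},q^{\ast}$ denote conjugate exponents. For a finite family $(y_i^{\ast})$ in $Y^{\ast}$, $\|(y_i^{\ast})\|_{p^{\ast},\omega}=\sup_{y\in B_{Y}}\|(\langle y_i^{\ast},y\rangle)_i\|_{p^{\ast}}$. $T$ is positive $(p,q)$-majorizing if there is $C>0$ such that $(\sum_{i=1}^n|\langle T(z_i),y_i^{\ast}\rangle|^{q^{\ast}})^{1/q^{\ast}}\le C\|(y_i^{\ast})_{i=1}^n\|_{p^{\ast},\omega}$ for all $n$, all $z_1,\dots,z_n\in B_E$ and all positive $y_1^{\ast},\dots,y_n^{\ast}\in Y^{\ast}$. $T$ is positive strongly $(p,q)$-summing if there is $C>0$ with $\sum_{i=1}^n|\langle T(x_i),y_i^{\ast}\rangle|\le C(\sum_i\|x_i\|^q)^{1/q}\|(y_i^{\ast})_{i=1}^n\|_{p^{\ast},\omega}$ for all $n$, all $x_i\in E$ and all positive $y_i^{\ast}\in Y^{\ast}$. *)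

theory Defs
  imports "HOL-Analysis.Analysis"
begin

class banach_lattice = banach + ordered_real_vector + lattice +
  assumes lattice_norm_mono: "sup x (- x) \<le> sup y (- y) \<Longrightarrow> norm x \<le> norm y"

definition conj_exp :: "ereal \<Rightarrow> ereal" where
  "conj_exp p = (if p = 1 then \<infinity> else if p = \<infinity> then 1
                 else ereal (real_of_ereal p / (real_of_ereal p - 1)))"

definition seq_norm :: "ereal \<Rightarrow> nat \<Rightarrow> (nat \<Rightarrow> real) \<Rightarrow> real" where
  "seq_norm r n a = (if r = \<infinity> then Max (insert 0 ((\<lambda>i. \<bar>a i\<bar>) ` {..<n}))
                     else (\<Sum>i<n. \<bar>a i\<bar> powr real_of_ereal r) powr (1 / real_of_ereal r))"

definition weak_norm :: "ereal \<Rightarrow> nat \<Rightarrow> (nat \<Rightarrow> ('b::real_normed_vector \<Rightarrow>\<^sub>L real)) \<Rightarrow> real" where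
  "weak_norm p n ys = (SUP y\<in>{y::'b. norm y \<le> 1}. seq_norm (conj_exp p) n (\<lambda>i. blinfun_apply (ys i) y))"

definition positive_functional :: "('b::{real_normed_vector, order, zero} \<Rightarrow>\<^sub>L real) \<Rightarrow> bool" where
  "positive_functional f = (\<forall>y. 0 \<le> y \<longrightarrow> 0 \<le> blinfun_apply f y)"

definition pos_majorizing :: "ereal \<Rightarrow> ereal \<Rightarrow> ('a::real_normed_vector \<Rightarrow> 'b::banach_lattice) \<Rightarrow> bool" where
  "pos_majorizing p q T = (\<exists>C>0. \<forall>n (z::nat \<Rightarrow> 'a) (ys::nat \<Rightarrow> ('b \<Rightarrow>\<^sub>L real)).
      (\<forall>i<n. norm (z i) \<le> 1) \<longrightarrow> (\<forall>i<n. positive_functional (ys i)) \<longrightarrow>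
      seq_norm (conj_exp q) n (\<lambda>i. blinfun_apply (ys i) (T (z i))) \<le> C * weak_norm p n ys)"

definition pos_strongly_summing :: "ereal \<Rightarrow> ereal \<Rightarrow> ('a::real_normed_vector \<Rightarrow> 'b::banach_lattice) \<Rightarrow> bool" where
  "pos_strongly_summing p q T = (\<exists>C>0. \<forall>n (x::nat \<Rightarrow> 'a) (ys::nat \<Rightarrow> ('b \<Rightarrow>\<^sub>L real)).
      (\<forall>i<n. positive_functional (ys i)) \<longrightarrow>
      (\<Sum>i<n. \<bar>blinfun_apply (ys i) (T (x i))\<bar>)
        \<le> C * seq_norm q n (\<lambda>i. norm (x i)) * weak_norm p n ys)"

end

theory Submission
  imports Defs
begin

lemma holder_fin:
  fixes u v :: "nat \<Rightarrow> real" and p r :: real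
  assumes p: "p > 1" and r: "r > 1" and pr: "1/p + 1/r = 1"
    and u: "\<And>i. i < n \<Longrightarrow> u i \<ge> 0" and v: "\<And>i. i < n \<Longrightarrow> v i \<ge> 0"
  shows "(\<Sum>i<n. u i * v i) \<le> (\<Sum>i<n. u i powr p) powr (1/p) * (\<Sum>i<n. v i powr r) powr (1/r)"
proof -
  define A where "A = (\<Sum>i<n. u i powr p) powr (1/p)"
  define B where "B = (\<Sum>i<n. v i powr r) powr (1/r)"
  have SA: "(\<Sum>i<n. u i powr p) \<ge> 0" by (simp add: sum_nonneg)
  have SB: "(\<Sum>i<n. v i powr r) \<ge> 0" by (simp add: sum_nonneg)
  have Ap: "A powr p = (\<Sum>i<n. u i powr p)" unfolding A_def using SA p by (simp add: powr_powr)
  have Bp: "B powr r = (\<Sum>i<n. v i powr r)" unfolding B_def using SB r by (simp add: powr_powr)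
  show ?thesis
  proof (cases "A = 0 \<or> B = 0")
    case True
    then show ?thesis
    proof
      assume "A = 0"
      then have "(\<Sum>i<n. u i powr p) = 0" using Ap p by simp
      then have "\<forall>i\<in>{..<n}. u i powr p = 0" using sum_nonneg_eq_0_iff[of "{..<n}" "\<lambda>i. u i powr p"] by simp
      then have "\<forall>i\<in>{..<n}. u i = 0" by simp
      then show ?thesis by (simp add: A_def[symmetric] \<open>A = 0\<close>)
    next
      assume "B = 0"
      then have "(\<Sum>i<n. v i powr r) = 0" using Bp r by simp
      then have "\<forall>i\<in>{..<n}. v i powr r = 0" using sum_nonneg_eq_0_iff[of "{..<n}" "\<lambda>i. v i powr r"] by simp
      then have "\<forall>i\<in>{..<n}. v i = 0" by simp
      then show ?thesis by (simp add: B_def[symmetric] \<open>B = 0\<close>)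
    qed
  next
    case False
    have A0: "A > 0" using False A_def by (simp add: order_less_le)
    have B0: "B > 0" using False B_def by (simp add: order_less_le)
    have "(\<Sum>i<n. (u i / A) * (v i / B)) \<le> (\<Sum>i<n. (u i / A) powr p / p + (v i / B) powr r / r)"
      by (rule sum_mono, rule Youngs_inequality) (use p r pr u v A0 B0 in auto)
    also have "\<dots> = (\<Sum>i<n. u i powr p) / A powr p / p + (\<Sum>i<n. v i powr r) / B powr r / r"
      using u v A0 B0 by (simp add: sum.distrib powr_divide sum_divide_distrib)
    also have "\<dots> = 1" using A0 B0 pr by (simp flip: Ap Bp)
    finally have "(\<Sum>i<n. u i * v i) / (A * B) \<le> 1"
      by (simp add: sum_divide_distrib)
    then show ?thesis using A0 B0 by (simp add: A_def B_def divide_le_eq)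
  qed
qed

lemma conj_exp_cases:
  assumes "1 \<le> q"
  shows "(q = 1 \<and> conj_exp q = \<infinity>) \<or> (q = \<infinity> \<and> conj_exp q = 1) \<or>
         (\<exists>x. q = ereal x \<and> x > 1 \<and> conj_exp q = ereal (x/(x-1)))"
proof (cases q)
  case (real x)
  then show ?thesis using assms by (cases "x = 1") (auto simp: conj_exp_def)
qed (use assms in \<open>auto simp: conj_exp_def\<close>)

lemma conj_exp_ge1: "1 \<le> q \<Longrightarrow> 1 \<le> conj_exp q"
  using conj_exp_cases[of q] by (auto simp: field_simps)

lemma seq_norm_inf: "seq_norm \<infinity> n a = Max (insert 0 ((\<lambda>i. \<bar>a i\<bar>) ` {..<n}))"
  by (simp add: seq_norm_def)

lemma seq_norm_real: "seq_norm (ereal x) n a = (\<Sum>i<n. \<bar>a i\<bar> powr x) powr (1 / x)"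
  by (simp add: seq_norm_def)

lemma seq_norm_one: "seq_norm 1 n a = (\<Sum>i<n. \<bar>a i\<bar>)"
  using seq_norm_real[of 1 n a] by (simp add: one_ereal_def sum_nonneg)

lemma Max_ge_inf: "\<bar>a i\<bar> \<le> seq_norm \<infinity> n a" if "i < n"
  using that by (simp add: seq_norm_inf)

lemma seq_norm_nonneg: "0 \<le> seq_norm r n a"
  by (simp add: seq_norm_def)

lemma seq_norm_mono:
  assumes "1 \<le> r" and st: "\<And>i. i < n \<Longrightarrow> \<bar>s i\<bar> \<le> \<bar>t i\<bar>"
  shows "seq_norm r n s \<le> seq_norm r n t"
proof (cases r)
  case (real x)
  then have x: "x \<ge> 1" using assms by simp
  have "(\<Sum>i<n. \<bar>s i\<bar> powr x) \<le> (\<Sum>i<n. \<bar>t i\<bar> powr x)"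
    by (rule sum_mono, rule powr_mono2) (use x st in auto)
  then show ?thesis unfolding real seq_norm_real
    using x by (intro powr_mono2) (auto simp: sum_nonneg)
next
  case PInf
  show ?thesis unfolding PInf seq_norm_inf
    by (rule Max.boundedI) (auto intro: order.trans[OF st] simp: seq_norm_inf[symmetric] Max_ge_inf seq_norm_nonneg)
next
  case MInf then show ?thesis using assms by simp
qed

lemma seq_norm_holder:
  assumes q: "1 \<le> q" and s: "\<And>i. i < n \<Longrightarrow> 0 \<le> s i"
  shows "(\<Sum>i<n. s i * \<bar>a i\<bar>) \<le> seq_norm q n s * seq_norm (conj_exp q) n a"
proof -
  consider "q = 1" "conj_exp q = \<infinity>" | "q = \<infinity>" "conj_exp q = 1"
    | x where "q = ereal x" "x > 1" "conj_exp q = ereal (x/(x-1))"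
    using conj_exp_cases[OF q] by blast
  then show ?thesis
  proof cases
    case 1
    have "(\<Sum>i<n. s i * \<bar>a i\<bar>) \<le> (\<Sum>i<n. s i * seq_norm \<infinity> n a)"
      by (rule sum_mono, rule mult_left_mono) (auto simp: s Max_ge_inf)
    also have "\<dots> = seq_norm q n s * seq_norm (conj_exp q) n a"
      using 1 s by (simp add: seq_norm_one sum_distrib_right)
    finally show ?thesis .
  next
    case 2
    have "(\<Sum>i<n. s i * \<bar>a i\<bar>) \<le> (\<Sum>i<n. seq_norm \<infinity> n s * \<bar>a i\<bar>)"
      by (rule sum_mono, rule mult_right_mono) (use Max_ge_inf[of _ n s] s in force)+
    also have "\<dots> = seq_norm q n s * seq_norm (conj_exp q) n a"
      using 2 by (simp add: seq_norm_one sum_distrib_left)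
    finally show ?thesis .
  next
    case 3
    have "(\<Sum>i<n. s i * \<bar>a i\<bar>) \<le> (\<Sum>i<n. s i powr x) powr (1/x) * (\<Sum>i<n. \<bar>a i\<bar> powr (x/(x-1))) powr (1/(x/(x-1)))"
      by (rule holder_fin) (use 3 s in \<open>auto simp: field_simps\<close>)
    also have "\<dots> = seq_norm q n s * seq_norm (conj_exp q) n a"
      using 3 s by (simp add: seq_norm_real)
    finally show ?thesis .
  qed
qed

lemma seq_norm_zero_fun: "1 \<le> q \<Longrightarrow> seq_norm q n (\<lambda>i. 0) = 0"
  by (cases q) (auto simp: seq_norm_def image_constant_conv)

lemma seq_norm_dual:
  assumes q: "1 \<le> q"
  shows "\<exists>l. (\<forall>i. 0 \<le> l i) \<and> seq_norm q n l \<le> 1 \<and>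
              seq_norm (conj_exp q) n a \<le> (\<Sum>i<n. l i * \<bar>a i\<bar>)"
proof -
  consider "q = 1" "conj_exp q = \<infinity>" | "q = \<infinity>" "conj_exp q = 1"
    | x where "q = ereal x" "x > 1" "conj_exp q = ereal (x/(x-1))"
    using conj_exp_cases[OF q] by blast
  then show ?thesis
  proof cases
    case 1
    show ?thesis
    proof (cases "seq_norm \<infinity> n a = 0")
      case True
      then show ?thesis using 1 by (intro exI[of _ "\<lambda>i. 0"]) (simp add: seq_norm_one)
    next
      case False
      have "seq_norm \<infinity> n a \<in> insert 0 ((\<lambda>i. \<bar>a i\<bar>) ` {..<n})"
        unfolding seq_norm_inf by (rule Max_in) auto
      with False obtain k where k: "k < n" "seq_norm \<infinity> n a = \<bar>a k\<bar>" by auto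
      have "(\<Sum>i<n. (if i = k then 1 else 0) * \<bar>a i\<bar>) = (\<Sum>i<n. if i = k then \<bar>a i\<bar> else 0)"
        by (rule sum.cong) auto
      also have "\<dots> = \<bar>a k\<bar>" using k by simp
      finally have e: "(\<Sum>i<n. (if i = k then 1 else 0) * \<bar>a i\<bar>) = \<bar>a k\<bar>" .
      have "(\<Sum>i<n. \<bar>if i = k then 1 else 0::real\<bar>) = (\<Sum>i<n. if i = k then 1 else 0::real)"
        by (rule sum.cong) auto
      also have "\<dots> = 1" using k by simp
      finally have e2: "(\<Sum>i<n. \<bar>if i = k then 1 else 0::real\<bar>) = 1" .
      show ?thesis using 1 k e e2
        by (intro exI[of _ "\<lambda>i. if i = k then 1 else 0"]) (simp add: seq_norm_one)
    qed
  next
    case 2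
    have "seq_norm \<infinity> n (\<lambda>i. 1) \<le> 1" unfolding seq_norm_inf
      by (rule Max.boundedI) auto
    then show ?thesis using 2 by (intro exI[of _ "\<lambda>i. 1"]) (simp add: seq_norm_one)
  next
    case 3
    define r where "r = x/(x-1)"
    have r1: "r > 1" using 3 by (simp add: r_def field_simps)
    have rx: "(r - 1) * x = r" using 3 by (simp add: r_def field_simps)
    define S where "S = seq_norm (ereal r) n a"
    have SS: "S = (\<Sum>i<n. \<bar>a i\<bar> powr r) powr (1/r)" by (simp add: S_def seq_norm_real)
    have Sr: "S powr r = (\<Sum>i<n. \<bar>a i\<bar> powr r)" unfolding SS using r1
      by (simp add: powr_powr sum_nonneg)
    show ?thesis
    proof (cases "S = 0")
      case True
      then show ?thesis using 3 q r_def S_def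
        by (intro exI[of _ "\<lambda>i. 0"]) (simp add: seq_norm_zero_fun)
    next
      case False
      then have S0: "S > 0" using seq_norm_nonneg[of "ereal r" n a] S_def by simp
      define l where "l i = \<bar>a i\<bar> powr (r-1) / S powr (r-1)" for i
      have l0: "\<forall>i. 0 \<le> l i" by (simp add: l_def)
      have e1: "\<bar>a i\<bar> powr (r-1) * \<bar>a i\<bar> = \<bar>a i\<bar> powr r" for i
        by (cases "a i = 0") (use r1 in \<open>auto simp: powr_diff\<close>)
      have "(\<Sum>i<n. l i * \<bar>a i\<bar>) = (\<Sum>i<n. \<bar>a i\<bar> powr r) / S powr (r-1)"
        by (simp add: l_def e1 sum_divide_distrib)
      also have "\<dots> = S" using S0 by (simp add: Sr[symmetric] powr_diff)
      finally have A: "(\<Sum>i<n. l i * \<bar>a i\<bar>) = S" .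
      have e2: "\<bar>l i\<bar> powr x = \<bar>a i\<bar> powr r / S powr r" for i
        using S0 by (simp add: l_def powr_divide powr_powr rx)
      have "(\<Sum>i<n. \<bar>l i\<bar> powr x) = 1"
        using S0 by (simp add: e2 Sr[symmetric] sum_divide_distrib[symmetric])
      then have B: "seq_norm q n l = 1" using 3 by (simp add: seq_norm_real)
      show ?thesis using A B l0 3 by (intro exI[of _ l]) (simp add: S_def r_def)
    qed
  qed
qed

lemma weak_norm_nonneg:
  assumes p: "1 \<le> p"
  shows "0 \<le> weak_norm p n ys"
proof -
  have r: "1 \<le> conj_exp p" using conj_exp_ge1[OF p] .
  have bd: "seq_norm (conj_exp p) n (\<lambda>i. blinfun_apply (ys i) y) \<le> seq_norm (conj_exp p) n (\<lambda>i. norm (ys i))"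
    if "y \<in> {y. norm y \<le> 1}" for y
  proof (rule seq_norm_mono[OF r])
    fix i
    have "\<bar>blinfun_apply (ys i) y\<bar> \<le> norm (ys i) * norm y"
      using norm_blinfun[of "ys i" y] by simp
    also have "\<dots> \<le> norm (ys i)" using that by (simp add: mult_left_le)
    finally show "\<bar>blinfun_apply (ys i) y\<bar> \<le> \<bar>norm (ys i)\<bar>" by simp
  qed
  have "bdd_above ((\<lambda>y. seq_norm (conj_exp p) n (\<lambda>i. blinfun_apply (ys i) y)) ` {y. norm y \<le> 1})"
    using bd by (intro bdd_aboveI2) 
  then have "seq_norm (conj_exp p) n (\<lambda>i. blinfun_apply (ys i) 0) \<le> weak_norm p n ys"
    unfolding weak_norm_def by (intro cSUP_upper) auto
  then show ?thesis using seq_norm_nonneg[of "conj_exp p" n] order.trans by blast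
qed

theorem theorem3p5:
  fixes p q :: ereal and T :: "'a::banach \<Rightarrow> 'b::banach_lattice"
  assumes "1 \<le> q" and "q \<le> p" and "bounded_linear T"
  shows "pos_majorizing p q T \<longleftrightarrow> pos_strongly_summing p q T"
proof
  have p: "1 \<le> p" using assms by simp
  have lin: "T (c *\<^sub>R v) = c *\<^sub>R T v" for c v
    using assms(3) by (simp add: linear_simps)
  {
    assume "pos_majorizing p q T"
    then obtain C where C: "C > 0" and H: "\<And>n (z::nat \<Rightarrow> 'a) (ys::nat \<Rightarrow> ('b \<Rightarrow>\<^sub>L real)).
      (\<forall>i<n. norm (z i) \<le> 1) \<Longrightarrow> (\<forall>i<n. positive_functional (ys i)) \<Longrightarrow>
      seq_norm (conj_exp q) n (\<lambda>i. blinfun_apply (ys i) (T (z i))) \<le> C * weak_norm p n ys"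
      unfolding pos_majorizing_def by blast
    show "pos_strongly_summing p q T" unfolding pos_strongly_summing_def
    proof (intro exI[of _ C] conjI allI impI C)
      fix n and x :: "nat \<Rightarrow> 'a" and ys :: "nat \<Rightarrow> ('b \<Rightarrow>\<^sub>L real)"
      assume pos: "\<forall>i<n. positive_functional (ys i)"
      define z where "z i = (1 / norm (x i)) *\<^sub>R x i" for i
      have nz: "\<forall>i<n. norm (z i) \<le> 1" by (simp add: z_def)
      have xz: "x i = norm (x i) *\<^sub>R z i" for i by (cases "x i = 0") (simp_all add: z_def)
      have e: "\<bar>blinfun_apply (ys i) (T (x i))\<bar> = norm (x i) * \<bar>blinfun_apply (ys i) (T (z i))\<bar>" for i
        by (subst xz) (simp add: lin blinfun.scaleR_right abs_mult)
      have "(\<Sum>i<n. \<bar>blinfun_apply (ys i) (T (x i))\<bar>) = (\<Sum>i<n. norm (x i) * \<bar>blinfun_apply (ys i) (T (z i))\<bar>)"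
        by (simp add: e)
      also have "\<dots> \<le> seq_norm q n (\<lambda>i. norm (x i)) * seq_norm (conj_exp q) n (\<lambda>i. blinfun_apply (ys i) (T (z i)))"
        by (rule seq_norm_holder[OF assms(1)]) simp
      also have "\<dots> \<le> seq_norm q n (\<lambda>i. norm (x i)) * (C * weak_norm p n ys)"
        by (rule mult_left_mono[OF H[OF nz pos] seq_norm_nonneg])
      finally show "(\<Sum>i<n. \<bar>blinfun_apply (ys i) (T (x i))\<bar>) \<le> C * seq_norm q n (\<lambda>i. norm (x i)) * weak_norm p n ys"
        by (simp add: ac_simps)
    qed
  }
  {
    assume "pos_strongly_summing p q T"
    then obtain C where C: "C > 0" and H: "\<And>n (x::nat \<Rightarrow> 'a) (ys::nat \<Rightarrow> ('b \<Rightarrow>\<^sub>L real)).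
      (\<forall>i<n. positive_functional (ys i)) \<Longrightarrow>
      (\<Sum>i<n. \<bar>blinfun_apply (ys i) (T (x i))\<bar>) \<le> C * seq_norm q n (\<lambda>i. norm (x i)) * weak_norm p n ys"
      unfolding pos_strongly_summing_def by blast
    show "pos_majorizing p q T" unfolding pos_majorizing_def
    proof (intro exI[of _ C] conjI allI impI C)
      fix n and z :: "nat \<Rightarrow> 'a" and ys :: "nat \<Rightarrow> ('b \<Rightarrow>\<^sub>L real)"
      assume nz: "\<forall>i<n. norm (z i) \<le> 1" and pos: "\<forall>i<n. positive_functional (ys i)"
      define a where "a i = blinfun_apply (ys i) (T (z i))" for i
      obtain l where l0: "\<forall>i. 0 \<le> l i" and l1: "seq_norm q n l \<le> 1"
        and la: "seq_norm (conj_exp q) n a \<le> (\<Sum>i<n. l i * \<bar>a i\<bar>)"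
        using seq_norm_dual[OF assms(1)] by blast
      define x where "x i = l i *\<^sub>R z i" for i
      have e: "\<bar>blinfun_apply (ys i) (T (x i))\<bar> = l i * \<bar>a i\<bar>" for i
        using l0 by (simp add: x_def a_def lin blinfun.scaleR_right abs_mult)
      have sn: "seq_norm q n (\<lambda>i. norm (x i)) \<le> 1"
      proof -
        have "seq_norm q n (\<lambda>i. norm (x i)) \<le> seq_norm q n l"
        proof (rule seq_norm_mono[OF assms(1)])
          fix i assume "i < n"
          then show "\<bar>norm (x i)\<bar> \<le> \<bar>l i\<bar>"
            using nz l0 by (simp add: x_def mult_left_le)
        qed
        then show ?thesis using l1 by simp
      qed
      have W: "0 \<le> weak_norm p n ys" by (rule weak_norm_nonneg[OF p])
      have "seq_norm (conj_exp q) n a \<le> (\<Sum>i<n. \<bar>blinfun_apply (ys i) (T (x i))\<bar>)"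
        using la by (simp add: e)
      also have "\<dots> \<le> C * seq_norm q n (\<lambda>i. norm (x i)) * weak_norm p n ys" by (rule H[OF pos])
      also have "\<dots> \<le> C * 1 * weak_norm p n ys"
        using C W sn by (intro mult_right_mono mult_left_mono) auto
      finally have "seq_norm (conj_exp q) n a \<le> C * weak_norm p n ys" by simp
      moreover have "a = (\<lambda>i. blinfun_apply (ys i) (T (z i)))" by (simp add: a_def fun_eq_iff)
      ultimately show "seq_norm (conj_exp q) n (\<lambda>i. blinfun_apply (ys i) (T (z i))) \<le> C * weak_norm p n ys"
        by simp
    qed
  }
qed

end
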